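(* Fix an integer $b\ge2$, $\gamma\in(0,1)$, let $\phi$ be a real analytic $\mathbb{Z}$-periodic function satisfying condition (H), and assume $\alpha<\min\{1,\frac{\log b}{\log(1/\gamma)}\}$. Then for any $\mathbf{v},\mathbf{w}\in\Lambda^{\#}$ there exist $\mathbf{i}\neq\mathbf{j}\in\Sigma$ and $x_{\mathbf{v},\mathbf{w}}\in I_{\mathbf{v}}$ such that $S'(x_{\mathbf{v},\mathbf{w}},\mathbf{w}\mathbf{i})-S'(x_{\mathbf{v},\mathbf{w}},\mathbf{w}\mathbf{j})\neq0$.
   Context: $\Lambda=\{0,\dots,b-1\}$, $\Lambda^{\#}=\bigcup_{n\ge1}\Lambda^n$, $\Sigma=\Lambda^{\mathbb{Z}_+}$, $\nu$ uniform on $\Lambda$; $\mathbf{w}\mathbf{i}$ denotes concatenation. $S(x,\mathbf{j})=\sum_{n\ge1}\gamma^{n-1}\phi\big(\frac{x+j_1+j_2b+\cdots+j_nb^{n-1}}{b^n}\big)$, $S'$ its $x$-derivative. Condition (H): for all $\mathbf{i}\neq\mathbf{j}\in\Sigma$, $x\mapsto S(x,\mathbf{j})-S(x,\mathbf{i})$ is not identically zero. $\alpha$ is the constant such that for Lebesgue-a.e. $x$ the image $m_x$ of $\nu^{\mathbb{Z}_+}$ under $\mathbf{j}\mapsto S(x,\mathbf{j})$ is exact dimensional with dimension $\alpha$. For $\mathbf{v}=v_1\cdots v_n$, $I_{\mathbf{v}}=\big[\frac{v_1+v_2b+\cdots+v_nb^{n-1}}{b^n},\frac{1+v_1+v_2b+\cdots+v_nb^{n-1}}{b^n}\big)$.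 *)

theory Defs
  imports "HOL-Probability.Probability"
begin

text \<open>Digits: \<Lambda> = {0..<b}. Finite words are lists (first list element = v_1);
 infinite words are sequences nat => nat (index 0 = j_1).\<close>

definition words :: "nat \<Rightarrow> nat list set" where
  "words b = {v. v \<noteq> [] \<and> (\<forall>k\<in>set v. k < b)}"

definition seqs :: "nat \<Rightarrow> (nat \<Rightarrow> nat) set" where
  "seqs b = {j. \<forall>n. j n < b}"

definition concat_word :: "nat list \<Rightarrow> (nat \<Rightarrow> nat) \<Rightarrow> (nat \<Rightarrow> nat)" where
  "concat_word w i = (\<lambda>n. if n < length w then w ! n else i (n - length w))"

text \<open>S(x,j) = sum_{n>=1} gamma^(n-1) phi((x + j_1 + j_2 b + ... + j_n b^(n-1))/b^n),
 reindexed with n from 0.\<close>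
definition S_fun :: "nat \<Rightarrow> real \<Rightarrow> (real \<Rightarrow> real) \<Rightarrow> real \<Rightarrow> (nat \<Rightarrow> nat) \<Rightarrow> real" where
  "S_fun b \<gamma> \<phi> x j = (\<Sum>n. \<gamma> ^ n * \<phi> ((x + (\<Sum>k<Suc n. real (j k) * real b ^ k)) / real b ^ Suc n))"

definition S_deriv :: "nat \<Rightarrow> real \<Rightarrow> (real \<Rightarrow> real) \<Rightarrow> real \<Rightarrow> (nat \<Rightarrow> nat) \<Rightarrow> real" where
  "S_deriv b \<gamma> \<phi> x j = deriv (\<lambda>y. S_fun b \<gamma> \<phi> y j) x"

definition cyl_interval :: "nat \<Rightarrow> nat list \<Rightarrow> real set" where
  "cyl_interval b v =
     (let a = (\<Sum>k<length v. real (v ! k) * real b ^ k) in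
      {a / real b ^ length v ..< (1 + a) / real b ^ length v})"

definition real_analytic :: "(real \<Rightarrow> real) \<Rightarrow> bool" where
  "real_analytic f \<longleftrightarrow> (\<forall>x. \<exists>r>0. \<exists>c::nat \<Rightarrow> real.
      \<forall>y. \<bar>y - x\<bar> < r \<longrightarrow> (\<lambda>n. c n * (y - x) ^ n) sums f y)"

definition condH :: "nat \<Rightarrow> real \<Rightarrow> (real \<Rightarrow> real) \<Rightarrow> bool" where
  "condH b \<gamma> \<phi> \<longleftrightarrow> (\<forall>i\<in>seqs b. \<forall>j\<in>seqs b. i \<noteq> j \<longrightarrow>
      (\<exists>x. S_fun b \<gamma> \<phi> x j - S_fun b \<gamma> \<phi> x i \<noteq> 0))"

definition bernoulli_prod :: "nat \<Rightarrow> (nat \<Rightarrow> nat) measure" where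
  "bernoulli_prod b = PiM UNIV (\<lambda>_. uniform_count_measure {0..<b})"

definition m_x :: "nat \<Rightarrow> real \<Rightarrow> (real \<Rightarrow> real) \<Rightarrow> real \<Rightarrow> real measure" where
  "m_x b \<gamma> \<phi> x = distr (bernoulli_prod b) borel (\<lambda>j. S_fun b \<gamma> \<phi> x j)"

definition exact_dimensional :: "real measure \<Rightarrow> real \<Rightarrow> bool" where
  "exact_dimensional m d \<longleftrightarrow>
     (AE y in m. ((\<lambda>r. ln (measure m (ball y r)) / ln r) \<longlongrightarrow> d) (at_right 0))"

end

theory Submission imports Defs begin


lemma analytic_C1:
  fixes f :: "real \<Rightarrow> real"
  assumes "real_analytic f"
  shows "(f has_real_derivative deriv f x) (at x) \<and> isCont (deriv f) x"
proof -
  obtain r c where r: "r > 0" and c: "\<And>y. \<bar>y - x\<bar> < r \<Longrightarrow> (\<lambda>n. c n * (y - x) ^ n) sums f y"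
    using assms unfolding real_analytic_def by blast
  define g where "g = (\<lambda>h::real. \<Sum>n. c n * h ^ n)"
  define g1 where "g1 = (\<lambda>h::real. \<Sum>n. diffs c n * h ^ n)"
  have sm: "summable (\<lambda>n. c n * h ^ n)" if "norm h < r" for h
    using c[of "x + h"] that by (auto simp: sums_iff)
  have gf: "g h = f (x + h)" if "norm h < r" for h
    using c[of "x + h"] that unfolding g_def by (auto simp: sums_iff)
  have dg: "DERIV g h :> g1 h" if "norm h < r/2" for h
    unfolding g_def g1_def
    by (rule termdiffs_strong[of _ "r/2"]) (use sm[of "r/2"] r that in auto)
  have df: "DERIV f z :> g1 (z - x)" if "z \<in> ball x (r/2)" for z
  proof -
    have "DERIV (\<lambda>z. g (z - x)) z :> g1 (z - x)"
    proof -
      have "norm (z - x) < r/2" using that by (auto simp: dist_real_def abs_minus_commute)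
      then have "DERIV g (z + - x) :> g1 (z - x)" using dg by simp
      then show ?thesis using DERIV_shift[of g "g1 (z - x)" z "- x"] by simp
    qed
    then show ?thesis
      apply (rule has_field_derivative_transform_within_open[where S="ball x r"])
      using that r by (auto simp: dist_real_def gf)
  qed
  have dfe: "deriv f z = g1 (z - x)" if "z \<in> ball x (r/2)" for z
    using df[OF that] by (rule DERIV_imp_deriv)
  have smd: "summable (\<lambda>n. diffs c n * (r/4) ^ n)"
    by (rule termdiff_converges[of _ "r/2"]) (use r sm in auto)
  have "isCont g1 0"
    unfolding g1_def by (rule isCont_powser[OF smd]) (use r in auto)
  then have "isCont (\<lambda>z. g1 (z - x)) x"
  proof -
    have "isCont (\<lambda>z. z - x) x" by (intro continuous_intros)
    then show ?thesis using isCont_o2[where f="\<lambda>z. z - x" and a=x and g=g1] \<open>isCont g1 0\<close> by simp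
  qed
  moreover have "eventually (\<lambda>z. deriv f z = g1 (z - x)) (nhds x)"
  proof -
    have "eventually (\<lambda>z. z \<in> ball x (r/2)) (nhds x)"
      using eventually_nhds_in_open[of "ball x (r/2)" x] r by simp
    then show ?thesis by (rule eventually_mono) (rule dfe)
  qed
  ultimately have "isCont (deriv f) x" using isCont_cong[of "deriv f" "\<lambda>z. g1 (z - x)" x] by simp
  moreover have "DERIV f x :> deriv f x" using df[of x] dfe[of x] r by auto
  ultimately show ?thesis by auto
qed




lemma periodic_int:
  fixes \<psi> :: "real \<Rightarrow> real"
  assumes per: "\<forall>x. \<psi> (x + 1) = \<psi> x"
  shows "\<psi> (x + real n) = \<psi> x"
  by (induction n arbitrary: x) (auto simp: per add.assoc[symmetric])

lemma periodic_bounded: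
  fixes \<psi> :: "real \<Rightarrow> real"
  assumes per: "\<forall>x. \<psi> (x + 1) = \<psi> x" and cont: "\<forall>x. isCont \<psi> x"
  shows "\<exists>M. \<forall>x. \<bar>\<psi> x\<bar> \<le> M"
proof -
  have "continuous_on {0..1} \<psi>" using cont by (simp add: continuous_at_imp_continuous_on)
  then have "compact (\<psi> ` {0..1})" by (rule compact_continuous_image) simp
  then have "bounded (\<psi> ` {0..1})" by (rule compact_imp_bounded)
  then obtain M where M: "\<forall>y\<in>{0..1}. \<bar>\<psi> y\<bar> \<le> M" unfolding bounded_iff by auto
  have "\<bar>\<psi> x\<bar> \<le> M" for x
  proof -
    define t where "t = x - of_int \<lfloor>x\<rfloor>"
    have t01: "t \<in> {0..1}" unfolding t_def by (auto simp: floor_le_iff) linarith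
    have "\<psi> x = \<psi> t"
    proof (cases "\<lfloor>x\<rfloor> \<ge> 0")
      case True
      then have "x = t + real (nat \<lfloor>x\<rfloor>)" unfolding t_def by simp
      then show ?thesis using periodic_int[OF per, of t "nat \<lfloor>x\<rfloor>"] by simp
    next
      case False
      then have "t = x + real (nat (- \<lfloor>x\<rfloor>))" unfolding t_def by simp
      then show ?thesis using periodic_int[OF per, of x "nat (- \<lfloor>x\<rfloor>)"] by simp
    qed
    then show ?thesis using M t01 by simp
  qed
  then show ?thesis by blast
qed

definition sc :: "nat \<Rightarrow> (nat \<Rightarrow> nat) \<Rightarrow> nat \<Rightarrow> nat" where
  "sc a k = (\<lambda>n. case n of 0 \<Rightarrow> a | Suc m \<Rightarrow> k m)"

definition odo :: "nat \<Rightarrow> (nat \<Rightarrow> nat) \<Rightarrow> nat \<Rightarrow> nat" where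
  "odo b k = (\<lambda>n. if (\<forall>i<n. k i = b - 1) then (k n + 1) mod b else k n)"

definition pred_odo :: "nat \<Rightarrow> (nat \<Rightarrow> nat) \<Rightarrow> nat \<Rightarrow> nat" where
  "pred_odo b k = (\<lambda>n. if (\<forall>i<n. k i = 0) then (k n + b - 1) mod b else k n)"

lemma odo_seqs: "b \<ge> 1 \<Longrightarrow> k \<in> seqs b \<Longrightarrow> odo b k \<in> seqs b"
  by (auto simp: odo_def seqs_def)

lemma pred_seqs: "b \<ge> 1 \<Longrightarrow> k \<in> seqs b \<Longrightarrow> pred_odo b k \<in> seqs b"
  by (auto simp: pred_odo_def seqs_def)

lemma pred_zero_iff:
  assumes "k \<in> seqs b" "b \<ge> 2"
  shows "(\<forall>i<n. pred_odo b k i = b - 1) \<longleftrightarrow> (\<forall>i<n. k i = 0)"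
proof (induction n)
  case 0 then show ?case by simp
next
  case (Suc n)
  have kn: "k n < b" using assms by (auto simp: seqs_def)
  have "(\<forall>i<Suc n. pred_odo b k i = b - 1) \<longleftrightarrow> (\<forall>i<n. pred_odo b k i = b - 1) \<and> pred_odo b k n = b - 1"
    by (auto simp: less_Suc_eq)
  also have "\<dots> \<longleftrightarrow> (\<forall>i<n. k i = 0) \<and> pred_odo b k n = b - 1" using Suc by simp
  also have "\<dots> \<longleftrightarrow> (\<forall>i<n. k i = 0) \<and> k n = 0"
  proof (cases "\<forall>i<n. k i = 0")
    case True
    have "(k n + b - 1) mod b = b - 1 \<longleftrightarrow> k n = 0"
    proof
      assume h: "(k n + b - 1) mod b = b - 1"
      show "k n = 0"
      proof (rule ccontr)
        assume "k n \<noteq> 0"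
        then have e: "k n + b - 1 = (k n - 1) + b" by arith
        have "(k n - 1) mod b = k n - 1" using kn by simp
        then have "(k n + b - 1) mod b = k n - 1" unfolding e by simp
        then show False using h kn \<open>k n \<noteq> 0\<close> by simp
      qed
    qed (use assms in simp)
    then show ?thesis using True by (simp add: pred_odo_def)
  qed fastforce
  also have "\<dots> \<longleftrightarrow> (\<forall>i<Suc n. k i = 0)" by (auto simp: less_Suc_eq)
  finally show ?case .
qed

lemma odo_pred:
  assumes "k \<in> seqs b" "b \<ge> 2"
  shows "odo b (pred_odo b k) = k"
proof
  fix n
  have kn: "k n < b" using assms by (auto simp: seqs_def)
  show "odo b (pred_odo b k) n = k n"
  proof (cases "\<forall>i<n. k i = 0")
    case True
    then have "odo b (pred_odo b k) n = (pred_odo b k n + 1) mod b"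
      using pred_zero_iff[OF assms, of n] by (simp add: odo_def)
    also have "\<dots> = ((k n + b - 1) mod b + 1) mod b" using True by (simp add: pred_odo_def)
    also have "\<dots> = (k n + b - 1 + 1) mod b" by (simp add: mod_Suc_eq)
    also have "\<dots> = k n" using assms kn by simp
    finally show ?thesis .
  next
    case False
    then have "\<not> (\<forall>i<n. pred_odo b k i = b - 1)" using pred_zero_iff[OF assms, of n] by simp
    moreover have "odo b k' n = (if (\<forall>i<n. k' i = b - 1) then (k' n + 1) mod b else k' n)" for k'
      by (simp add: odo_def)
    ultimately have "odo b (pred_odo b k) n = pred_odo b k n" by (simp only: if_not_P if_False)
    also have "\<dots> = k n" using False unfolding pred_odo_def by auto
    finally show ?thesis .
  qed
qed

definition Kn :: "nat \<Rightarrow> nat \<Rightarrow> (nat \<Rightarrow> nat) \<Rightarrow> int" where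
  "Kn b n k = (\<Sum>i<n. int (k i) * int b ^ i)"

lemma Kn_odo:
  assumes "k \<in> seqs b" "b \<ge> 2"
  shows "((\<forall>i<n. k i = b - 1) \<longrightarrow> Kn b n (odo b k) = 0 \<and> Kn b n k = int b ^ n - 1) \<and>
         (\<not> (\<forall>i<n. k i = b - 1) \<longrightarrow> Kn b n (odo b k) = Kn b n k + 1)"
proof (induction n)
  case 0 then show ?case by (simp add: Kn_def)
next
  case (Suc n)
  have kn: "k n < b" using assms by (auto simp: seqs_def)
  have KS: "Kn b (Suc n) k' = Kn b n k' + int (k' n) * int b ^ n" for k'
    by (simp add: Kn_def)
  show ?case
  proof (cases "\<forall>i<n. k i = b - 1")
    case True
    then have o: "odo b k n = (k n + 1) mod b" by (simp add: odo_def)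
    show ?thesis
    proof (cases "k n = b - 1")
      case True2: True
      then have "\<forall>i<Suc n. k i = b - 1" using True by (auto simp: less_Suc_eq)
      moreover have "odo b k n = 0" using o True2 assms by simp
      moreover have "int (b - 1) = int b - 1" using assms by simp
      ultimately show ?thesis using Suc True True2 unfolding KS
        by (simp add: algebra_simps)
    next
      case False
      then have nall: "\<not> (\<forall>i<Suc n. k i = b - 1)" by auto
      have "odo b k n = k n + 1" using o False kn by simp
      then have "Kn b (Suc n) (odo b k) = Kn b (Suc n) k + 1" unfolding KS using Suc True
        by (simp add: algebra_simps)
      then show ?thesis using nall by blast
    qed
  next
    case False
    then have nall: "\<not> (\<forall>i<Suc n. k i = b - 1)" using less_SucI by blast
    have "odo b k n = k n" using False unfolding odo_def by auto
    moreover have "Kn b n (odo b k) = Kn b n k + 1" using Suc.IH False by blast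
    ultimately have "Kn b (Suc n) (odo b k) = Kn b (Suc n) k + 1" unfolding KS by simp
    then show ?thesis using nall by blast
  qed
qed

lemma shift_term:
  fixes \<psi> :: "real \<Rightarrow> real"
  assumes per: "\<forall>x. \<psi> (x + 1) = \<psi> x" and k: "k \<in> seqs b" and b: "b \<ge> 2"
  shows "\<psi> ((y + 1 + (\<Sum>i<Suc n. real (k i) * real b ^ i)) / real b ^ Suc n) =
         \<psi> ((y + (\<Sum>i<Suc n. real (odo b k i) * real b ^ i)) / real b ^ Suc n)"
proof -
  have conv: "(\<Sum>i<Suc n. real (k' i) * real b ^ i) = real_of_int (Kn b (Suc n) k')" for k'
    by (simp add: Kn_def)
  have pos: "real b ^ Suc n > 0" using b by simp
  note K = Kn_odo[OF k b, of "Suc n"]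
  show ?thesis
  proof (cases "\<forall>i<Suc n. k i = b - 1")
    case True
    then have "real_of_int (Kn b (Suc n) k) = real b ^ Suc n - 1" "Kn b (Suc n) (odo b k) = 0"
      using K by auto
    then have e: "y + 1 + real_of_int (Kn b (Suc n) k) = y + real b ^ Suc n" by simp
    have "(y + 1 + real_of_int (Kn b (Suc n) k)) / real b ^ Suc n = (y + real b ^ Suc n) / real b ^ Suc n"
      by (simp only: e)
    also have "\<dots> = y / real b ^ Suc n + 1" using pos b by (simp add: add_divide_distrib)
    finally have "(y + 1 + real_of_int (Kn b (Suc n) k)) / real b ^ Suc n =
          (y + real_of_int (Kn b (Suc n) (odo b k))) / real b ^ Suc n + 1"
      using \<open>Kn b (Suc n) (odo b k) = 0\<close> by simp
    then show ?thesis unfolding conv using per by simp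
  next
    case False
    then have "Kn b (Suc n) (odo b k) = Kn b (Suc n) k + 1" using K by auto
    then show ?thesis unfolding conv by (simp add: algebra_simps)
  qed
qed

lemma sum_sc:
  "(\<Sum>i<Suc (Suc n). real (sc a k i) * real b ^ i) = real a + real b * (\<Sum>i<Suc n. real (k i) * real b ^ i)"
  by (subst sum.lessThan_Suc_shift) (simp add: sc_def sum_distrib_left algebra_simps)

lemma concat_Cons: "concat_word (a # w) i = sc a (concat_word w i)"
  by (auto simp: concat_word_def sc_def split: nat.split)

lemma concat_Nil: "concat_word [] i = i"
  by (auto simp: concat_word_def)

lemma concat_seqs: "w \<in> words b \<Longrightarrow> i \<in> seqs b \<Longrightarrow> concat_word w i \<in> seqs b"
  by (auto simp: concat_word_def seqs_def words_def)




definition argf :: "nat \<Rightarrow> real \<Rightarrow> (nat \<Rightarrow> nat) \<Rightarrow> nat \<Rightarrow> real" where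
  "argf b y k n = (y + (\<Sum>i<Suc n. real (k i) * real b ^ i)) / real b ^ Suc n"

locale lphi =
  fixes b :: nat and \<gamma> :: real and \<phi> \<phi>' :: "real \<Rightarrow> real"
  assumes b2: "b \<ge> 2" and g0: "0 < \<gamma>" and g1: "\<gamma> < 1"
    and per: "\<forall>x. \<phi> (x + 1) = \<phi> x"
    and dphi: "\<And>x. (\<phi> has_real_derivative \<phi>' x) (at x)"
    and cphi: "\<And>x. isCont \<phi>' x"
begin

definition Dv :: "real \<Rightarrow> (nat \<Rightarrow> nat) \<Rightarrow> real" where
  "Dv y k = (\<Sum>n. \<gamma> ^ n * (\<phi>' (argf b y k n) / real b ^ Suc n))"

lemma S_arg: "S_fun b \<gamma> \<phi> y k = (\<Sum>n. \<gamma> ^ n * \<phi> (argf b y k n))"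
  by (simp add: S_fun_def argf_def)

lemma per': "\<phi>' (x + 1) = \<phi>' x"
proof -
  have "DERIV (\<lambda>t. \<phi> (t + 1)) x :> \<phi>' (x + 1)"
    using dphi[of "x + 1"] DERIV_shift[of \<phi> "\<phi>' (x + 1)" x 1] by simp
  moreover have "(\<lambda>t. \<phi> (t + 1)) = \<phi>" using per by auto
  ultimately show ?thesis using DERIV_unique dphi by metis
qed

lemma cphi0: "isCont \<phi> x"
  using dphi DERIV_isCont by blast

lemma bnd_phi: "\<exists>M. \<forall>x. \<bar>\<phi> x\<bar> \<le> M"
  by (rule periodic_bounded) (use per cphi0 in auto)

lemma bnd_phi': "\<exists>M. \<forall>x. \<bar>\<phi>' x\<bar> \<le> M"
  by (rule periodic_bounded) (use per' cphi in auto)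

lemma bpos: "real b ^ n \<ge> 1"
  using b2 by (simp add: one_le_power)

lemma term'_bound:
  assumes "\<forall>x. \<bar>\<phi>' x\<bar> \<le> M"
  shows "norm (\<gamma> ^ n * (\<phi>' z / real b ^ Suc n)) \<le> M * \<gamma> ^ n"
proof -
  have "\<bar>\<phi>' z / real b ^ Suc n\<bar> \<le> \<bar>\<phi>' z\<bar>"
  proof -
    have B: "real b ^ Suc n \<ge> 1" by (rule bpos)
    have "\<bar>\<phi>' z\<bar> * 1 \<le> \<bar>\<phi>' z\<bar> * real b ^ Suc n" using mult_left_mono[OF B abs_ge_zero] .
    then have "\<bar>\<phi>' z\<bar> / real b ^ Suc n \<le> \<bar>\<phi>' z\<bar>" using B by (simp add: pos_divide_le_eq)
    moreover have "\<bar>\<phi>' z / real b ^ Suc n\<bar> = \<bar>\<phi>' z\<bar> / real b ^ Suc n" using B by (simp add: abs_divide)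
    ultimately show ?thesis by simp
  qed
  then have "\<bar>\<phi>' z / real b ^ Suc n\<bar> \<le> M" using assms by (meson order_trans)
  moreover define q where "q = \<phi>' z / real b ^ Suc n"
  ultimately have "\<bar>q\<bar> \<le> M" by simp
  then have "\<gamma> ^ n * \<bar>q\<bar> \<le> \<gamma> ^ n * M" using g0 by (intro mult_left_mono) auto
  moreover have "norm (\<gamma> ^ n * q) = \<gamma> ^ n * \<bar>q\<bar>" using g0 by (simp add: abs_mult)
  ultimately show ?thesis unfolding q_def[symmetric] by (simp add: mult.commute)
qed

lemma summable_D: "summable (\<lambda>n. \<gamma> ^ n * (\<phi>' (argf b y k n) / real b ^ Suc n))"
proof -
  obtain M where M: "\<forall>x. \<bar>\<phi>' x\<bar> \<le> M" using bnd_phi' by blast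
  show ?thesis
    by (rule summable_comparison_test'[where g="\<lambda>n. M * \<gamma> ^ n" and N=0])
       (use g0 g1 term'_bound[OF M] in \<open>auto intro!: summable_mult summable_geometric\<close>)
qed

lemma summable_S: "summable (\<lambda>n. \<gamma> ^ n * \<phi> (argf b y k n))"
proof -
  obtain M where M: "\<forall>x. \<bar>\<phi> x\<bar> \<le> M" using bnd_phi by blast
  show ?thesis
    by (rule summable_comparison_test'[where g="\<lambda>n. M * \<gamma> ^ n" and N=0])
       (use g0 g1 M in \<open>auto intro!: summable_mult summable_geometric simp: abs_mult mult.commute mult_left_mono\<close>)
qed

lemma S_bound: "\<exists>B. \<forall>y k. \<bar>S_fun b \<gamma> \<phi> y k\<bar> \<le> B"
proof -
  obtain M where M: "\<forall>x. \<bar>\<phi> x\<bar> \<le> M" using bnd_phi by blast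
  have sg: "summable (\<lambda>n. M * \<gamma> ^ n)" using g0 g1 by (auto intro!: summable_mult summable_geometric)
  have "\<bar>S_fun b \<gamma> \<phi> y k\<bar> \<le> (\<Sum>n. M * \<gamma> ^ n)" for y k
  proof -
    have le: "\<bar>\<gamma> ^ n * \<phi> (argf b y k n)\<bar> \<le> M * \<gamma> ^ n" for n
      using g0 M by (simp add: abs_mult mult.commute mult_left_mono)
    have "S_fun b \<gamma> \<phi> y k \<le> (\<Sum>n. M * \<gamma> ^ n)"
      unfolding S_arg by (rule suminf_le) (use le summable_S sg in \<open>auto simp: abs_le_iff\<close>)
    moreover have "- S_fun b \<gamma> \<phi> y k \<le> (\<Sum>n. M * \<gamma> ^ n)"
    proof -
      have "- S_fun b \<gamma> \<phi> y k = (\<Sum>n. - (\<gamma> ^ n * \<phi> (argf b y k n)))"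
        unfolding S_arg using summable_S by (simp add: suminf_minus)
      also have "\<dots> \<le> (\<Sum>n. M * \<gamma> ^ n)"
        by (rule suminf_le) (use le summable_S sg in \<open>auto simp: abs_le_iff summable_minus_iff\<close>)
      finally show ?thesis .
    qed
    ultimately show ?thesis by linarith
  qed
  then show ?thesis by blast
qed

lemma arg_deriv: "((\<lambda>y. argf b y k n) has_real_derivative 1 / real b ^ Suc n) (at y)"
  unfolding argf_def using b2 by (auto intro!: derivative_eq_intros)

lemma S_has_deriv:
  "DERIV (\<lambda>y. S_fun b \<gamma> \<phi> y k) x :> Dv x k \<and> continuous_on UNIV (\<lambda>y. Dv y k)"
proof -
  define f where "f = (\<lambda>n y. \<gamma> ^ n * \<phi> (argf b y k n))"
  define f' where "f' = (\<lambda>n y. \<gamma> ^ n * (\<phi>' (argf b y k n) / real b ^ Suc n))"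
  obtain M where M: "\<forall>x. \<bar>\<phi>' x\<bar> \<le> M" using bnd_phi' by blast
  have df: "(f n has_field_derivative f' n y) (at y within UNIV)" for n y
  proof -
    have "DERIV (\<lambda>y. \<phi> (argf b y k n)) y :> \<phi>' (argf b y k n) * (1 / real b ^ Suc n)"
      by (rule DERIV_chain2[OF dphi arg_deriv])
    then have "DERIV (\<lambda>y. \<gamma> ^ n * \<phi> (argf b y k n)) y :> \<gamma> ^ n * (\<phi>' (argf b y k n) * (1 / real b ^ Suc n))"
      by (rule DERIV_cmult)
    then show ?thesis unfolding f_def f'_def by simp
  qed
  have ul: "uniform_limit UNIV (\<lambda>n y. \<Sum>i<n. f' i y) (\<lambda>y. suminf (\<lambda>i. f' i y)) sequentially"
    by (rule Weierstrass_m_test[where M="\<lambda>n. M * \<gamma> ^ n"])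
       (use g0 g1 term'_bound[OF M] in \<open>auto simp: f'_def intro!: summable_mult summable_geometric\<close>)
  obtain g where g: "\<forall>x\<in>UNIV. (\<lambda>n. f n x) sums g x \<and> (g has_field_derivative (\<lambda>y. suminf (\<lambda>i. f' i y)) x) (at x within UNIV)"
    using has_field_derivative_series[OF convex_UNIV df ul, of 0] summable_S
    unfolding f_def by blast
  have geq: "g = (\<lambda>y. S_fun b \<gamma> \<phi> y k)"
    using g unfolding S_arg f_def by (auto simp: sums_iff)
  have Deq: "(\<lambda>y. suminf (\<lambda>i. f' i y)) = (\<lambda>y. Dv y k)"
    unfolding Dv_def f'_def by simp
  have Dx: "suminf (\<lambda>i. f' i x) = Dv x k" unfolding Dv_def f'_def by simp
  have "(g has_field_derivative suminf (\<lambda>i. f' i x)) (at x)" using g by simp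
  then have "DERIV (\<lambda>y. S_fun b \<gamma> \<phi> y k) x :> suminf (\<lambda>i. f' i x)" by (simp only: geq)
  then have 1: "DERIV (\<lambda>y. S_fun b \<gamma> \<phi> y k) x :> Dv x k" by (simp only: Dx)
  have ic: "isCont (\<lambda>y. f' i y) y" for i y
  proof -
    have "isCont (\<lambda>y. argf b y k i) y" using arg_deriv DERIV_isCont by blast
    then have "isCont (\<lambda>y. \<phi>' (argf b y k i)) y" using isCont_o2[where g=\<phi>'] cphi by blast
    then show ?thesis unfolding f'_def using b2 by (intro continuous_intros) auto
  qed
  have "continuous_on UNIV (\<lambda>y. suminf (\<lambda>i. f' i y))"
  proof (rule uniform_limit_theorem[OF _ ul])
    show "\<forall>\<^sub>F n in sequentially. continuous_on UNIV (\<lambda>y. \<Sum>i<n. f' i y)"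
      using ic by (auto intro!: always_eventually continuous_at_imp_continuous_on continuous_intros)
  qed simp
  then have "continuous_on UNIV (\<lambda>y. Dv y k)" by (simp only: Deq)
  then show ?thesis using 1 by simp
qed

lemma S_deriv_eq: "S_deriv b \<gamma> \<phi> x k = Dv x k"
  unfolding S_deriv_def using S_has_deriv by (blast intro: DERIV_imp_deriv)

lemma D_sc: "Dv y (sc a k) = \<phi>' ((y + real a) / real b) / real b + (\<gamma> / real b) * Dv ((y + real a) / real b) k"
proof -
  define t where "t = (\<lambda>n. \<gamma> ^ n * (\<phi>' (argf b y (sc a k) n) / real b ^ Suc n))"
  have st: "summable t" unfolding t_def by (rule summable_D)
  have t0: "t 0 = \<phi>' ((y + real a) / real b) / real b"
    unfolding t_def argf_def by (simp add: sc_def)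
  have tS: "t (Suc n) = (\<gamma> / real b) * (\<gamma> ^ n * (\<phi>' (argf b ((y + real a) / real b) k n) / real b ^ Suc n))" for n
  proof -
    have bp: "real b > 0" using b2 by simp
    have "argf b y (sc a k) (Suc n) = argf b ((y + real a) / real b) k n"
      unfolding argf_def sum_sc using bp by (simp add: field_simps)
    then show ?thesis unfolding t_def by (simp add: field_simps)
  qed
  have "Dv y (sc a k) = suminf t" unfolding Dv_def t_def ..
  also have "\<dots> = t 0 + (\<Sum>n. t (Suc n))" using suminf_split_head[OF st] by simp
  also have "(\<Sum>n. t (Suc n)) = (\<gamma> / real b) * Dv ((y + real a) / real b) k"
    unfolding tS Dv_def by (rule suminf_mult[OF summable_D])
  finally show ?thesis using t0 by simp
qed

lemma D_shift: "k \<in> seqs b \<Longrightarrow> Dv (y + 1) k = Dv y (odo b k)"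
  unfolding Dv_def argf_def using shift_term[of \<phi>' k b y] per' b2 by simp

lemma S_shift: "k \<in> seqs b \<Longrightarrow> S_fun b \<gamma> \<phi> (y + 1) k = S_fun b \<gamma> \<phi> y (odo b k)"
  unfolding S_fun_def using shift_term[of \<phi> k b y] per b2 by simp

end




context lphi begin

lemma reduce:
  "\<exists>y c. c \<noteq> 0 \<and> (\<forall>i j. Dv x (concat_word w i) - Dv x (concat_word w j) = c * (Dv y i - Dv y j))"
proof (induction w arbitrary: x)
  case Nil
  show ?case by (rule exI[of _ x], rule exI[of _ 1]) (simp add: concat_Nil)
next
  case (Cons a w)
  obtain y c where yc: "c \<noteq> 0" "\<forall>i j. Dv ((x + real a) / real b) (concat_word w i) - Dv ((x + real a) / real b) (concat_word w j) = c * (Dv y i - Dv y j)"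
    using Cons.IH by blast
  have "Dv x (concat_word (a # w) i) - Dv x (concat_word (a # w) j) = (\<gamma> / real b * c) * (Dv y i - Dv y j)" for i j
  proof -
    have d: "Dv x (sc a u) - Dv x (sc a u') = (\<gamma> / real b) * (Dv ((x + real a) / real b) u - Dv ((x + real a) / real b) u')" for u u'
      unfolding D_sc by (simp add: right_diff_distrib)
    show ?thesis unfolding concat_Cons d using yc(2) by simp
  qed
  moreover have "\<gamma> / real b * c \<noteq> 0" using yc(1) g0 b2 by simp
  ultimately show ?case by blast
qed

definition PZ :: "real \<Rightarrow> bool" where
  "PZ z \<longleftrightarrow> (\<forall>k\<in>seqs b. \<forall>k'\<in>seqs b. Dv z k = Dv z k')"

lemma PZ_plus: "PZ z \<Longrightarrow> PZ (z + 1)"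
  unfolding PZ_def using D_shift odo_seqs b2 by (metis one_le_numeral order_trans)

lemma PZ_minus: "PZ z \<Longrightarrow> PZ (z - 1)"
proof -
  assume h: "PZ z"
  have b1: "b \<ge> 1" using b2 by simp
  show ?thesis unfolding PZ_def
  proof (intro ballI)
    fix k k' assume k: "k \<in> seqs b" and k': "k' \<in> seqs b"
    have "Dv (z - 1) k = Dv (z - 1) (odo b (pred_odo b k))" using odo_pred[OF k b2] by simp
    also have "\<dots> = Dv z (pred_odo b k)" using D_shift[OF pred_seqs[OF b1 k], of "z - 1"] by simp
    also have "\<dots> = Dv z (pred_odo b k')" using h pred_seqs[OF b1 k] pred_seqs[OF b1 k'] unfolding PZ_def by blast
    also have "\<dots> = Dv (z - 1) (odo b (pred_odo b k'))" using D_shift[OF pred_seqs[OF b1 k'], of "z - 1"] by simp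
    also have "\<dots> = Dv (z - 1) k'" using odo_pred[OF k' b2] by simp
    finally show "Dv (z - 1) k = Dv (z - 1) k'" .
  qed
qed

lemma PZ_div: "PZ z \<Longrightarrow> PZ (z / real b)"
proof -
  assume h: "PZ z"
  show ?thesis unfolding PZ_def
  proof (intro ballI)
    fix k k' assume k: "k \<in> seqs b" and k': "k' \<in> seqs b"
    have s: "sc 0 k \<in> seqs b" "sc 0 k' \<in> seqs b" using k k' b2 by (auto simp: seqs_def sc_def split: nat.split)
    have "Dv z (sc 0 k) = Dv z (sc 0 k')" using h s unfolding PZ_def by blast
    then have "(\<gamma> / real b) * Dv (z / real b) k = (\<gamma> / real b) * Dv (z / real b) k'"
      using D_sc[of z 0 k] D_sc[of z 0 k'] by simp
    moreover have "\<gamma> / real b \<noteq> 0" using g0 b2 by simp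
    ultimately show "Dv (z / real b) k = Dv (z / real b) k'" by simp
  qed
qed

lemma PZ_nat: "PZ z \<Longrightarrow> PZ (z + real n) \<and> PZ (z - real n)"
proof (induction n)
  case 0 then show ?case by simp
next
  case (Suc n)
  then have "PZ (z + real n + 1)" "PZ (z - real n - 1)" using PZ_plus PZ_minus by auto
  then show ?case by (simp add: algebra_simps)
qed

lemma PZ_int: "PZ z \<Longrightarrow> PZ (z + of_int m)"
proof (cases "m \<ge> 0")
  case True
  assume "PZ z"
  then have "PZ (z + real (nat m))" using PZ_nat by blast
  then show ?thesis using True by simp
next
  case False
  assume "PZ z"
  then have "PZ (z - real (nat (- m)))" using PZ_nat by blast
  then show ?thesis using False by simp
qed

lemma PZ_pow: "PZ z \<Longrightarrow> PZ (z / real b ^ r)"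
proof (induction r)
  case 0 then show ?case by simp
next
  case (Suc r)
  then have "PZ (z / real b ^ r / real b)" using PZ_div by blast
  then show ?case by (simp add: field_simps)
qed

lemma PZ_all:
  assumes "PZ z"
  shows "PZ x"
proof -
  define xr where "xr = (\<lambda>r::nat. (z + of_int \<lfloor>x * real b ^ r\<rfloor>) / real b ^ r)"
  have Pxr: "PZ (xr r)" for r unfolding xr_def using PZ_pow PZ_int assms by blast
  have bound: "norm (xr r - x) \<le> (\<bar>z\<bar> + 1) * (1 / real b) ^ r" for r
  proof -
    define B where "B = real b ^ r"
    have Bp: "B > 0" unfolding B_def using b2 by simp
    define fl where "fl = real_of_int \<lfloor>x * B\<rfloor>"
    have fl: "x * B - 1 < fl" "fl \<le> x * B" unfolding fl_def by linarith+
    have "xr r - x = (z + fl - x * B) / B" unfolding xr_def fl_def B_def using Bp B_def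
      by (simp add: field_simps)
    then have "norm (xr r - x) = \<bar>z + fl - x * B\<bar> / B" using Bp by simp
    also have "\<dots> \<le> (\<bar>z\<bar> + 1) / B"
      using fl Bp by (intro divide_right_mono) (auto simp: abs_le_iff)
    also have "\<dots> = (\<bar>z\<bar> + 1) * (1 / real b) ^ r" unfolding B_def by (simp add: power_one_over)
    finally show ?thesis .
  qed
  have "(\<lambda>r. (\<bar>z\<bar> + 1) * (1 / real b) ^ r) \<longlonglongrightarrow> 0"
    using b2 by (intro tendsto_mult_right_zero LIMSEQ_realpow_zero) auto
  then have "(\<lambda>r. xr r - x) \<longlonglongrightarrow> 0"
    by (rule Lim_null_comparison[rotated]) (use bound in auto)
  then have lim: "xr \<longlonglongrightarrow> x" by (rule LIM_zero_cancel)
  show ?thesis unfolding PZ_def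
  proof (intro ballI)
    fix k k' assume k: "k \<in> seqs b" and k': "k' \<in> seqs b"
    have c: "isCont (\<lambda>y. Dv y k'') x" for k''
      using S_has_deriv[of k'' 0] continuous_on_eq_continuous_at[OF open_UNIV] by blast
    have l1: "(\<lambda>r. Dv (xr r) k) \<longlonglongrightarrow> Dv x k" by (rule isCont_tendsto_compose[OF c lim])
    have l2: "(\<lambda>r. Dv (xr r) k') \<longlonglongrightarrow> Dv x k'" by (rule isCont_tendsto_compose[OF c lim])
    have "(\<lambda>r. Dv (xr r) k) = (\<lambda>r. Dv (xr r) k')" using Pxr k k' unfolding PZ_def by blast
    then show "Dv x k = Dv x k'" using l1 l2 LIMSEQ_unique by metis
  qed
qed

lemma final:
  assumes "PZ z" and H: "condH b \<gamma> \<phi>"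
  shows False
proof -
  define k0 where "k0 = (\<lambda>_::nat. 0::nat)"
  define k1 where "k1 = odo b k0"
  have s0: "k0 \<in> seqs b" unfolding k0_def seqs_def using b2 by simp
  have s1: "k1 \<in> seqs b" unfolding k1_def using odo_seqs[OF _ s0] b2 by simp
  have ne: "k0 \<noteq> k1"
  proof
    assume "k0 = k1"
    then have "k0 0 = k1 0" by simp
    then show False using b2 unfolding k0_def k1_def odo_def by simp
  qed
  define F where "F = (\<lambda>y. S_fun b \<gamma> \<phi> y k1 - S_fun b \<gamma> \<phi> y k0)"
  have dF: "\<forall>y. DERIV F y :> 0"
  proof
    fix y
    have "DERIV F y :> Dv y k1 - Dv y k0"
      unfolding F_def using S_has_deriv by (auto intro!: derivative_intros)
    moreover have "Dv y k1 = Dv y k0" using PZ_all[OF assms(1), of y] s0 s1 unfolding PZ_def by blast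
    ultimately show "DERIV F y :> 0" by simp
  qed
  then have Fc: "F y = F 0" for y using DERIV_isconst_all by blast
  have step: "S_fun b \<gamma> \<phi> (y + 1) k0 = S_fun b \<gamma> \<phi> y k0 + F 0" for y
    using S_shift[OF s0, of y] Fc[of y] unfolding F_def k1_def by simp
  have lin: "S_fun b \<gamma> \<phi> (real n) k0 = S_fun b \<gamma> \<phi> 0 k0 + real n * F 0" for n
  proof (induction n)
    case 0 then show ?case by simp
  next
    case (Suc n)
    then show ?case using step[of "real n"] by (simp add: algebra_simps)
  qed
  obtain B where B: "\<forall>y k. \<bar>S_fun b \<gamma> \<phi> y k\<bar> \<le> B" using S_bound by blast
  have F0: "F 0 = 0"
  proof (rule ccontr)
    assume "F 0 \<noteq> 0"
    then have pos: "\<bar>F 0\<bar> > 0" by simp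
    obtain n :: nat where n: "2 * B / \<bar>F 0\<bar> < real n" using reals_Archimedean2 by blast
    have "real n * \<bar>F 0\<bar> \<le> 2 * B"
    proof -
      have "\<bar>real n * F 0\<bar> \<le> \<bar>S_fun b \<gamma> \<phi> (real n) k0\<bar> + \<bar>S_fun b \<gamma> \<phi> 0 k0\<bar>"
        using lin[of n] by linarith
      moreover have "\<bar>real n * F 0\<bar> = real n * \<bar>F 0\<bar>" by (simp add: abs_mult)
      moreover have "\<bar>S_fun b \<gamma> \<phi> (real n) k0\<bar> \<le> B" "\<bar>S_fun b \<gamma> \<phi> 0 k0\<bar> \<le> B" using B by blast+
      ultimately show ?thesis by linarith
    qed
    moreover have "2 * B < real n * \<bar>F 0\<bar>" using n pos by (simp add: pos_divide_less_eq)
    ultimately show False by simp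
  qed
  obtain x where "S_fun b \<gamma> \<phi> x k1 - S_fun b \<gamma> \<phi> x k0 \<noteq> 0"
    using H s0 s1 ne unfolding condH_def by blast
  then show False using Fc[of x] F0 unfolding F_def by simp
qed

end




theorem lemma6p3:
  fixes b :: nat and \<gamma> \<alpha> :: real and \<phi> :: "real \<Rightarrow> real"
  assumes "b \<ge> 2"
    and "0 < \<gamma>" and "\<gamma> < 1"
    and "real_analytic \<phi>"
    and "\<forall>x. \<phi> (x + 1) = \<phi> x"
    and "condH b \<gamma> \<phi>"
    and "AE x in lborel. exact_dimensional (m_x b \<gamma> \<phi> x) \<alpha>"
    and "\<alpha> < min 1 (ln (real b) / ln (1 / \<gamma>))"
    and "v \<in> words b" and "w \<in> words b"
  shows "\<exists>i\<in>seqs b. \<exists>j\<in>seqs b. i \<noteq> j \<and> (\<exists>x\<in>cyl_interval b v.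
           S_deriv b \<gamma> \<phi> x (concat_word w i) - S_deriv b \<gamma> \<phi> x (concat_word w j) \<noteq> 0)"
proof (rule ccontr)
  assume H: "\<not> ?thesis"
  interpret L: lphi b \<gamma> \<phi> "deriv \<phi>"
    by unfold_locales (use assms analytic_C1[OF assms(4)] in auto)
  define a where "a = (\<Sum>k<length v. real (v ! k) * real b ^ k)"
  define x0 where "x0 = a / real b ^ length v"
  have x0: "x0 \<in> cyl_interval b v"
    unfolding cyl_interval_def x0_def a_def Let_def using assms(1) by (simp add: divide_strict_right_mono)
  have eq: "L.Dv x0 (concat_word w i) = L.Dv x0 (concat_word w j)" if "i \<in> seqs b" "j \<in> seqs b" for i j
  proof (cases "i = j")
    case False
    then show ?thesis using H that x0 by (auto simp: L.S_deriv_eq)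
  qed simp
  obtain y c where yc: "c \<noteq> 0" "\<forall>i j. L.Dv x0 (concat_word w i) - L.Dv x0 (concat_word w j) = c * (L.Dv y i - L.Dv y j)"
    using L.reduce by blast
  have "L.PZ y" unfolding L.PZ_def
  proof (intro ballI)
    fix i j assume "i \<in> seqs b" "j \<in> seqs b"
    then have "c * (L.Dv y i - L.Dv y j) = 0" using eq yc(2) by (metis diff_self)
    then show "L.Dv y i = L.Dv y j" using yc(1) by simp
  qed
  then show False using L.final assms(6) by blast
qed


end
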